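(* Assume $V=L$. Let $\zeta,\eta\in\Xi$ with $\eta\subseteq\zeta$, let $X,Y\in\mathrm{IPS}_\zeta$ with $X\restriction\eta=Y\restriction\eta$, and let $i\in\zeta\setminus\eta$. Then there exist $k<\omega$ and sets $X',Y'\in\mathrm{IPS}_\zeta$ with $X'\subseteq X$, $Y'\subseteq Y$, $X'$ clopen in $X$, $Y'$ clopen in $Y$, such that $X'\restriction\eta=Y'\restriction\eta$, and either $x(i)(k)=0$ and $y(i)(k)=1$ for all $x\in X'$, $y\in Y'$, or $x(i)(k)=1$ and $y(i)(k)=0$ for all $x\in X'$, $y\in Y'$.
   Context: $T$ is the set of all nonempty finite sequences of countable ordinals, ordered by strict extension $\subset$. $\Xi$ is the set of all at most countable $\xi\subseteq T$ closed downward under $\subset$. $D=2^\omega$; $D^\xi$ is the product of $\xi$ copies of $D$ with the product topology. For $\eta\subseteq\xi$, $x\in D^\xi$: $x\restriction\eta$ is the restriction, and $X\restriction\eta=\{x\restriction\eta:x\in X\}$. For $\zeta\in\Xi$, $\mathrm{IPS}_\zeta$ is the set of all $X\subseteq D^\zeta$ for which there is a homeomorphism $H$ of $D^\zeta$ onto $X$ such that for all $x_0,x_1\in D^\zeta$ and all $\xi\in\Xi$, $\xi\subseteq\zeta$: $x_0\restriction\xi=x_1\restriction\xi\iff H(x_0)\restriction\xi=H(x_1)\restriction\xi$. *)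

theory Defs
  imports "HOL-Analysis.Analysis"
begin

text \<open>Countable ordinals are modelled by a type 'o of class wellorder which is
  isomorphic to omega_1 (uncountable, all proper initial segments countable);
  these hypotheses appear in the theorem.\<close>

definition T_set :: "'o list set" where
  "T_set = {s. s \<noteq> []}"

definition strict_ext :: "'o list \<Rightarrow> 'o list \<Rightarrow> bool" where
  "strict_ext s t \<longleftrightarrow> (\<exists>u. u \<noteq> [] \<and> t = s @ u)"

definition Xi :: "'o list set set" where
  "Xi = {\<xi>. countable \<xi> \<and> \<xi> \<subseteq> T_set \<and>
          (\<forall>t\<in>\<xi>. \<forall>s\<in>T_set. strict_ext s t \<longrightarrow> s \<in> \<xi>)}"

definition D_top :: "(nat \<Rightarrow> bool) topology" where
  "D_top = product_topology (\<lambda>_. discrete_topology (UNIV :: bool set)) (UNIV :: nat set)"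

definition Dpow :: "'o list set \<Rightarrow> ('o list \<Rightarrow> nat \<Rightarrow> bool) topology" where
  "Dpow \<xi> = product_topology (\<lambda>_. D_top) \<xi>"

definition restr :: "('o list \<Rightarrow> nat \<Rightarrow> bool) \<Rightarrow> 'o list set \<Rightarrow> ('o list \<Rightarrow> nat \<Rightarrow> bool)" where
  "restr x \<eta> = restrict x \<eta>"

definition restr_set :: "('o list \<Rightarrow> nat \<Rightarrow> bool) set \<Rightarrow> 'o list set \<Rightarrow> ('o list \<Rightarrow> nat \<Rightarrow> bool) set" where
  "restr_set X \<eta> = (\<lambda>x. restr x \<eta>) ` X"

definition IPS :: "'o list set \<Rightarrow> ('o list \<Rightarrow> nat \<Rightarrow> bool) set set" where
  "IPS \<zeta> = {X. X \<subseteq> topspace (Dpow \<zeta>) \<and>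
     (\<exists>H. homeomorphic_map (Dpow \<zeta>) (subtopology (Dpow \<zeta>) X) H \<and>
        (\<forall>x0\<in>topspace (Dpow \<zeta>). \<forall>x1\<in>topspace (Dpow \<zeta>). \<forall>\<xi>\<in>Xi. \<xi> \<subseteq> \<zeta> \<longrightarrow>
           (restr x0 \<xi> = restr x1 \<xi> \<longleftrightarrow> restr (H x0) \<xi> = restr (H x1) \<xi>)))}"

definition clopen_in :: "('o list \<Rightarrow> nat \<Rightarrow> bool) set \<Rightarrow> 'o list set \<Rightarrow> ('o list \<Rightarrow> nat \<Rightarrow> bool) set \<Rightarrow> bool" where
  "clopen_in A \<zeta> X \<longleftrightarrow> openin (subtopology (Dpow \<zeta>) X) A \<and> closedin (subtopology (Dpow \<zeta>) X) A"

end

theory Submission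
  imports Defs
begin


lemma topspace_D [simp]: "topspace D_top = UNIV"
  by (simp add: D_top_def PiE_UNIV_domain)

lemma topspace_Dpow: "topspace (Dpow \<zeta>) = extensional \<zeta>"
  by (simp add: Dpow_def PiE_def)

lemma compact_Dpow: "compact_space (Dpow \<zeta>)"
  unfolding Dpow_def D_top_def
  by (simp add: compact_space_product_topology compact_space_discrete_topology)

lemma Hausdorff_Dpow: "Hausdorff_space (Dpow \<zeta>)"
  unfolding Dpow_def D_top_def
  by (simp add: Hausdorff_space_product_topology)

lemma cont_coord: "t \<in> \<zeta> \<Longrightarrow> continuous_map (Dpow \<zeta>) (discrete_topology UNIV) (\<lambda>x. x t m)"
proof -
  assume t: "t \<in> \<zeta>"
  have "continuous_map (Dpow \<zeta>) D_top (\<lambda>x. x t)"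
    unfolding Dpow_def using t by (rule continuous_map_product_projection)
  moreover have "continuous_map D_top (discrete_topology UNIV) (\<lambda>f. f m)"
    unfolding D_top_def by (rule continuous_map_product_projection) simp
  ultimately show ?thesis using continuous_map_compose[unfolded o_def] by blast
qed

lemma cont_into_Dpow:
  assumes "\<And>x. x \<in> topspace Z \<Longrightarrow> F x \<in> extensional \<zeta>"
    and "\<And>t m. t \<in> \<zeta> \<Longrightarrow> continuous_map Z (discrete_topology UNIV) (\<lambda>x. F x t m)"
  shows "continuous_map Z (Dpow \<zeta>) F"
  unfolding Dpow_def continuous_map_componentwise
proof (intro conjI ballI)
  show "F ` topspace Z \<subseteq> extensional \<zeta>" using assms(1) by blast
  fix t assume "t \<in> \<zeta>"
  then show "continuous_map Z D_top (\<lambda>x. F x t)"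
    unfolding D_top_def continuous_map_componentwise_UNIV using assms(2) by blast
qed


definition good :: "'o list set \<Rightarrow> (('o list \<Rightarrow> nat \<Rightarrow> bool) \<Rightarrow> ('o list \<Rightarrow> nat \<Rightarrow> bool)) \<Rightarrow> bool" where
  "good \<zeta> F \<longleftrightarrow> continuous_map (Dpow \<zeta>) (Dpow \<zeta>) F \<and>
     (\<forall>x0\<in>topspace (Dpow \<zeta>). \<forall>x1\<in>topspace (Dpow \<zeta>). \<forall>\<xi>\<in>Xi. \<xi> \<subseteq> \<zeta> \<longrightarrow>
           (restr x0 \<xi> = restr x1 \<xi> \<longleftrightarrow> restr (F x0) \<xi> = restr (F x1) \<xi>))"

lemma restr_full: "x \<in> topspace (Dpow \<zeta>) \<Longrightarrow> restr x \<zeta> = x"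
  by (simp add: restr_def topspace_Dpow extensional_restrict)

lemma good_cont: "good \<zeta> F \<Longrightarrow> continuous_map (Dpow \<zeta>) (Dpow \<zeta>) F"
  unfolding good_def by (rule conjunct1)

lemma good_D:
  assumes "good \<zeta> F" "x0 \<in> topspace (Dpow \<zeta>)" "x1 \<in> topspace (Dpow \<zeta>)" "\<xi> \<in> Xi" "\<xi> \<subseteq> \<zeta>"
  shows "restr x0 \<xi> = restr x1 \<xi> \<longleftrightarrow> restr (F x0) \<xi> = restr (F x1) \<xi>"
proof -
  have "\<forall>x0\<in>topspace (Dpow \<zeta>). \<forall>x1\<in>topspace (Dpow \<zeta>). \<forall>\<xi>\<in>Xi. \<xi> \<subseteq> \<zeta> \<longrightarrow>
           (restr x0 \<xi> = restr x1 \<xi> \<longleftrightarrow> restr (F x0) \<xi> = restr (F x1) \<xi>)"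
    using assms(1) unfolding good_def by (rule conjunct2)
  from this[rule_format, OF assms(2) assms(3) assms(4) assms(5)] show ?thesis .
qed

lemma good_I:
  assumes "continuous_map (Dpow \<zeta>) (Dpow \<zeta>) F"
    "\<And>x0 x1 \<xi>. x0 \<in> topspace (Dpow \<zeta>) \<Longrightarrow> x1 \<in> topspace (Dpow \<zeta>) \<Longrightarrow> \<xi> \<in> Xi \<Longrightarrow> \<xi> \<subseteq> \<zeta> \<Longrightarrow>
      (restr x0 \<xi> = restr x1 \<xi> \<longleftrightarrow> restr (F x0) \<xi> = restr (F x1) \<xi>)"
  shows "good \<zeta> F"
  unfolding good_def using assms(1) apply (rule conjI)
  apply (intro ballI impI) by (rule assms(2))

lemma good_top: "good \<zeta> F \<Longrightarrow> x \<in> topspace (Dpow \<zeta>) \<Longrightarrow> F x \<in> topspace (Dpow \<zeta>)"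
  using good_cont continuous_map_image_subset_topspace by (metis image_subset_iff)

lemma good_inj:
  assumes "\<zeta> \<in> Xi" "good \<zeta> F" shows "inj_on F (topspace (Dpow \<zeta>))"
proof (rule inj_onI)
  fix x y assume x: "x \<in> topspace (Dpow \<zeta>)" and y: "y \<in> topspace (Dpow \<zeta>)" and e: "F x = F y"
  have "restr x \<zeta> = restr y \<zeta>" using good_D[OF assms(2) x y assms(1) order_refl] e by simp
  then show "x = y" using x y by (simp add: restr_full)
qed

lemma good_homeo:
  assumes "\<zeta> \<in> Xi" "good \<zeta> F"
  shows "homeomorphic_map (Dpow \<zeta>) (subtopology (Dpow \<zeta>) (F ` topspace (Dpow \<zeta>))) F"
proof (rule continuous_imp_homeomorphic_map)
  have c: "continuous_map (Dpow \<zeta>) (Dpow \<zeta>) F" using assms(2) by (rule good_cont)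
  then show "continuous_map (Dpow \<zeta>) (subtopology (Dpow \<zeta>) (F ` topspace (Dpow \<zeta>))) F"
    by (intro continuous_map_into_subtopology) auto
  show "compact_space (Dpow \<zeta>)" by (rule compact_Dpow)
  show "Hausdorff_space (subtopology (Dpow \<zeta>) (F ` topspace (Dpow \<zeta>)))"
    by (intro Hausdorff_space_subtopology Hausdorff_Dpow)
  have "F ` topspace (Dpow \<zeta>) \<subseteq> topspace (Dpow \<zeta>)" using c by (rule continuous_map_image_subset_topspace)
  then show "F ` topspace (Dpow \<zeta>) = topspace (subtopology (Dpow \<zeta>) (F ` topspace (Dpow \<zeta>)))"
    by (simp add: Int_absorb1)
  show "inj_on F (topspace (Dpow \<zeta>))" using assms by (rule good_inj)
qed

lemma good_IPS:
  assumes "\<zeta> \<in> Xi" "good \<zeta> F"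
  shows "F ` topspace (Dpow \<zeta>) \<in> IPS \<zeta>"
  unfolding IPS_def
proof (intro CollectI conjI exI)
  show "F ` topspace (Dpow \<zeta>) \<subseteq> topspace (Dpow \<zeta>)"
    using good_cont[OF assms(2)] by (rule continuous_map_image_subset_topspace)
  show "homeomorphic_map (Dpow \<zeta>) (subtopology (Dpow \<zeta>) (F ` topspace (Dpow \<zeta>))) F"
    using assms by (rule good_homeo)
  show "\<forall>x0\<in>topspace (Dpow \<zeta>). \<forall>x1\<in>topspace (Dpow \<zeta>). \<forall>\<xi>\<in>Xi. \<xi> \<subseteq> \<zeta> \<longrightarrow>
           (restr x0 \<xi> = restr x1 \<xi> \<longleftrightarrow> restr (F x0) \<xi> = restr (F x1) \<xi>)"
    using assms(2) unfolding good_def by (rule conjunct2)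
qed

lemma good_clopen:
  assumes "\<zeta> \<in> Xi" "good \<zeta> F" "openin (Dpow \<zeta>) U" "closedin (Dpow \<zeta>) U"
  shows "clopen_in (F ` U) \<zeta> (F ` topspace (Dpow \<zeta>))"
proof -
  have U: "U \<subseteq> topspace (Dpow \<zeta>)" using assms(3) by (rule openin_subset)
  have h: "homeomorphic_map (Dpow \<zeta>) (subtopology (Dpow \<zeta>) (F ` topspace (Dpow \<zeta>))) F"
    using assms(1,2) by (rule good_homeo)
  show ?thesis unfolding clopen_in_def
    using homeomorphic_map_openness[OF h U] homeomorphic_map_closedness[OF h U] assms(3,4) by simp
qed

lemma good_comp:
  assumes "good \<zeta> F" "good \<zeta> G" shows "good \<zeta> (F \<circ> G)"
proof (rule good_I)
  show "continuous_map (Dpow \<zeta>) (Dpow \<zeta>) (F \<circ> G)"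
    by (rule continuous_map_compose[OF good_cont[OF assms(2)] good_cont[OF assms(1)]])
  fix x0 x1 \<xi> assume x0: "x0 \<in> topspace (Dpow \<zeta>)" and x1: "x1 \<in> topspace (Dpow \<zeta>)" and xi: "\<xi> \<in> Xi" "\<xi> \<subseteq> \<zeta>"
  have "restr x0 \<xi> = restr x1 \<xi> \<longleftrightarrow> restr (G x0) \<xi> = restr (G x1) \<xi>"
    by (rule good_D[OF assms(2) x0 x1 xi])
  also have "\<dots> \<longleftrightarrow> restr (F (G x0)) \<xi> = restr (F (G x1)) \<xi>"
    by (rule good_D[OF assms(1) good_top[OF assms(2) x0] good_top[OF assms(2) x1] xi])
  finally show "restr x0 \<xi> = restr x1 \<xi> \<longleftrightarrow> restr ((F \<circ> G) x0) \<xi> = restr ((F \<circ> G) x1) \<xi>" by simp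
qed

lemma IPS_good:
  assumes "X \<in> IPS \<zeta>"
  obtains H where "good \<zeta> H" "H ` topspace (Dpow \<zeta>) = X"
    "homeomorphic_map (Dpow \<zeta>) (subtopology (Dpow \<zeta>) X) H"
proof -
  have "X \<subseteq> topspace (Dpow \<zeta>) \<and>
     (\<exists>H. homeomorphic_map (Dpow \<zeta>) (subtopology (Dpow \<zeta>) X) H \<and>
        (\<forall>x0\<in>topspace (Dpow \<zeta>). \<forall>x1\<in>topspace (Dpow \<zeta>). \<forall>\<xi>\<in>Xi. \<xi> \<subseteq> \<zeta> \<longrightarrow>
           (restr x0 \<xi> = restr x1 \<xi> \<longleftrightarrow> restr (H x0) \<xi> = restr (H x1) \<xi>)))"
    using assms unfolding IPS_def by (rule CollectD)
  then obtain H where X: "X \<subseteq> topspace (Dpow \<zeta>)" and h: "homeomorphic_map (Dpow \<zeta>) (subtopology (Dpow \<zeta>) X) H"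
    and p: "\<forall>x0\<in>topspace (Dpow \<zeta>). \<forall>x1\<in>topspace (Dpow \<zeta>). \<forall>\<xi>\<in>Xi. \<xi> \<subseteq> \<zeta> \<longrightarrow>
           (restr x0 \<xi> = restr x1 \<xi> \<longleftrightarrow> restr (H x0) \<xi> = restr (H x1) \<xi>)"
    by (elim conjE exE)
  have c: "continuous_map (Dpow \<zeta>) (Dpow \<zeta>) H"
    using homeomorphic_imp_continuous_map[OF h] by (rule continuous_map_into_fulltopology)
  have "good \<zeta> H" unfolding good_def using c p by (rule conjI)
  moreover have "H ` topspace (Dpow \<zeta>) = X"
    using homeomorphic_imp_surjective_map[OF h] X by auto
  ultimately show ?thesis using that h by blast
qed

lemma restr_eq: "restr x \<xi> = restr y \<xi> \<longleftrightarrow> (\<forall>t\<in>\<xi>. x t = y t)"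
proof
  assume L: "restr x \<xi> = restr y \<xi>"
  show "\<forall>t\<in>\<xi>. x t = y t"
  proof
    fix t assume t: "t \<in> \<xi>"
    have "restrict x \<xi> t = restrict y \<xi> t" using L by (simp add: restr_def)
    then show "x t = y t" using t by simp
  qed
next
  assume a: "\<forall>t\<in>\<xi>. x t = y t"
  show "restr x \<xi> = restr y \<xi>" unfolding restr_def
  proof (rule restrict_ext)
    fix t assume "t \<in> \<xi>" then show "x t = y t" using a by simp
  qed
qed

definition shiftc :: "nat \<Rightarrow> (nat \<Rightarrow> bool) \<Rightarrow> (nat \<Rightarrow> bool) \<Rightarrow> (nat \<Rightarrow> bool)" where
  "shiftc n c f = (\<lambda>m. if m < n then c m else f (m - n))"

lemma shiftc_inj: "shiftc n c f = shiftc n c g \<longleftrightarrow> f = g"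
proof
  assume e: "shiftc n c f = shiftc n c g"
  show "f = g"
  proof
    fix m have "shiftc n c f (m + n) = shiftc n c g (m + n)" using e by simp
    then show "f m = g m" by (simp add: shiftc_def)
  qed
next
  assume "f = g" then show "shiftc n c f = shiftc n c g" by (rule arg_cong)
qed

definition Phi :: "'o list set \<Rightarrow> ('o list \<Rightarrow> nat \<Rightarrow> bool) \<Rightarrow> 'o list set \<Rightarrow> nat \<Rightarrow> ('o list \<Rightarrow> nat \<Rightarrow> bool) \<Rightarrow> ('o list \<Rightarrow> nat \<Rightarrow> bool)" where
  "Phi \<zeta> u S n p = restrict (\<lambda>t. if t \<in> S then shiftc n (u t) (p t) else p t) \<zeta>"

definition Cyl :: "'o list set \<Rightarrow> ('o list \<Rightarrow> nat \<Rightarrow> bool) \<Rightarrow> 'o list set \<Rightarrow> nat \<Rightarrow> ('o list \<Rightarrow> nat \<Rightarrow> bool) set" where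
  "Cyl \<zeta> u S n = {p \<in> topspace (Dpow \<zeta>). \<forall>t\<in>S. \<forall>m<n. p t m = u t m}"

lemma good_Phi: "good \<zeta> (Phi \<zeta> u S n)"
proof (rule good_I)
  show "continuous_map (Dpow \<zeta>) (Dpow \<zeta>) (Phi \<zeta> u S n)"
  proof (rule cont_into_Dpow)
    show "Phi \<zeta> u S n x \<in> extensional \<zeta>" for x by (simp add: Phi_def)
    fix t m assume t: "t \<in> \<zeta>"
    show "continuous_map (Dpow \<zeta>) (discrete_topology UNIV) (\<lambda>x. Phi \<zeta> u S n x t m)"
    proof (cases "t \<in> S \<and> m < n")
      case True
      then have e: "(\<lambda>x. Phi \<zeta> u S n x t m) = (\<lambda>x. u t m)"
        using t by (simp add: Phi_def shiftc_def)
      show ?thesis unfolding e by (simp add: continuous_map_const)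
    next
      case False
      have e: "(\<lambda>x. Phi \<zeta> u S n x t m) = (\<lambda>x. x t (if t \<in> S then m - n else m))"
      proof
        fix x show "Phi \<zeta> u S n x t m = x t (if t \<in> S then m - n else m)"
          using t False by (cases "t \<in> S") (simp_all add: Phi_def shiftc_def)
      qed
      show ?thesis unfolding e by (rule cont_coord[OF t])
    qed
  qed
  fix x0 x1 \<xi> assume "x0 \<in> topspace (Dpow \<zeta>)" "x1 \<in> topspace (Dpow \<zeta>)" "\<xi> \<in> Xi" and xi: "\<xi> \<subseteq> \<zeta>"
  have e: "Phi \<zeta> u S n x0 t = Phi \<zeta> u S n x1 t \<longleftrightarrow> x0 t = x1 t" if "t \<in> \<zeta>" for t
    using that by (cases "t \<in> S") (simp_all add: Phi_def shiftc_inj)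
  show "restr x0 \<xi> = restr x1 \<xi> \<longleftrightarrow> restr (Phi \<zeta> u S n x0) \<xi> = restr (Phi \<zeta> u S n x1) \<xi>"
    unfolding restr_eq using e xi by (simp add: subset_iff)
qed

lemma Phi_image: assumes "S \<subseteq> \<zeta>" shows "Phi \<zeta> u S n ` topspace (Dpow \<zeta>) = Cyl \<zeta> u S n"
proof
  show "Phi \<zeta> u S n ` topspace (Dpow \<zeta>) \<subseteq> Cyl \<zeta> u S n"
  proof
    fix y assume "y \<in> Phi \<zeta> u S n ` topspace (Dpow \<zeta>)"
    then obtain x where y: "y = Phi \<zeta> u S n x" by blast
    have "y \<in> extensional \<zeta>" unfolding y Phi_def by simp
    moreover have "y t m = u t m" if "t \<in> S" "m < n" for t m
      using that assms unfolding y by (auto simp: Phi_def shiftc_def)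
    ultimately show "y \<in> Cyl \<zeta> u S n" by (simp add: Cyl_def topspace_Dpow)
  qed
  show "Cyl \<zeta> u S n \<subseteq> Phi \<zeta> u S n ` topspace (Dpow \<zeta>)"
  proof
    fix q assume q: "q \<in> Cyl \<zeta> u S n"
    then have qe: "q \<in> extensional \<zeta>" and qc: "\<And>t m. t \<in> S \<Longrightarrow> m < n \<Longrightarrow> q t m = u t m"
      by (auto simp: Cyl_def topspace_Dpow)
    define p where "p = restrict (\<lambda>t. if t \<in> S then (\<lambda>m. q t (m + n)) else q t) \<zeta>"
    have "Phi \<zeta> u S n p = q"
    proof
      fix t show "Phi \<zeta> u S n p t = q t"
      proof (cases "t \<in> \<zeta>")
        case False then show ?thesis using qe by (simp add: Phi_def extensional_def)
      next
        case True
        show ?thesis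
        proof (cases "t \<in> S")
          case False then show ?thesis using True by (simp add: Phi_def p_def)
        next
          case tS: True
          show ?thesis
          proof
            fix m show "Phi \<zeta> u S n p t m = q t m"
              using True tS qc[OF tS] by (cases "m < n") (simp_all add: Phi_def p_def shiftc_def)
          qed
        qed
      qed
    qed
    moreover have "p \<in> topspace (Dpow \<zeta>)" by (simp add: p_def topspace_Dpow)
    ultimately show "q \<in> Phi \<zeta> u S n ` topspace (Dpow \<zeta>)" by blast
  qed
qed

lemma Cyl_closed: assumes "S \<subseteq> \<zeta>" shows "closedin (Dpow \<zeta>) (Cyl \<zeta> u S n)"
proof -
  have "compactin (Dpow \<zeta>) (Phi \<zeta> u S n ` topspace (Dpow \<zeta>))"
    using image_compactin[OF compact_Dpow[unfolded compact_space_def] good_cont[OF good_Phi]] .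
  then show ?thesis using Phi_image[OF assms] compactin_imp_closedin[OF Hausdorff_Dpow] by simp
qed

lemma Cyl_open:
  assumes "finite S" "S \<subseteq> \<zeta>" shows "openin (Dpow \<zeta>) (Cyl \<zeta> u S n)"
proof -
  have "Cyl \<zeta> u S n = topspace (Dpow \<zeta>) \<inter> \<Inter> ((\<lambda>(t,m). {p \<in> topspace (Dpow \<zeta>). p t m \<in> {u t m}}) ` (S \<times> {..<n}))"
    by (auto simp: Cyl_def)
  also have "openin (Dpow \<zeta>) \<dots>"
  proof (rule openin_Int_Inter)
    show "finite ((\<lambda>(t,m). {p \<in> topspace (Dpow \<zeta>). p t m \<in> {u t m}}) ` (S \<times> {..<n}))"
      using assms by simp
    show "openin (Dpow \<zeta>) (topspace (Dpow \<zeta>))" by simp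
    have o: "openin (Dpow \<zeta>) {p \<in> topspace (Dpow \<zeta>). p t m \<in> {u t m}}" if "t \<in> S" for t m
    proof -
      have "continuous_map (Dpow \<zeta>) (discrete_topology UNIV) (\<lambda>x. x t m)"
        using assms that by (intro cont_coord) auto
      from openin_continuous_map_preimage[OF this, of "{u t m}"] show ?thesis by simp
    qed
    fix X assume "X \<in> (\<lambda>(t,m). {p \<in> topspace (Dpow \<zeta>). p t m \<in> {u t m}}) ` (S \<times> {..<n})"
    then show "openin (Dpow \<zeta>) X" using o by auto
  qed
  finally show ?thesis .
qed


lemma nbhd_D:
  assumes "openin D_top V" "c \<in> V" shows "\<exists>k. {f. \<forall>m<k. f m = c m} \<subseteq> V"
proof -
  obtain W where fin: "finite {m \<in> UNIV. W m \<noteq> topspace (discrete_topology (UNIV::bool set))}"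
    and cW: "c \<in> Pi\<^sub>E UNIV W" and WV: "Pi\<^sub>E UNIV W \<subseteq> V"
    using assms(1)[unfolded D_top_def openin_product_topology_alt, rule_format, OF assms(2)] by blast
  from fin obtain k where k: "\<And>m. W m \<noteq> UNIV \<Longrightarrow> m < k"
    unfolding finite_nat_set_iff_bounded by auto
  have "{f. \<forall>m<k. f m = c m} \<subseteq> Pi\<^sub>E UNIV W"
  proof
    fix f assume f: "f \<in> {f. \<forall>m<k. f m = c m}"
    have "f m \<in> W m" for m
    proof (cases "m < k")
      case True then show ?thesis using f cW by (auto simp: PiE_iff)
    next
      case False have "W m = UNIV"
      proof (rule ccontr)
        assume "W m \<noteq> UNIV" then have "m < k" by (rule k)
        with False show False by simp
      qed
      then show ?thesis by simp
    qed
    then show "f \<in> Pi\<^sub>E UNIV W" by (simp add: PiE_iff)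
  qed
  then have "{f. \<forall>m<k. f m = c m} \<subseteq> V" using WV by (rule subset_trans)
  then show ?thesis by (rule exI)
qed

lemma nbhd_cyl:
  assumes "openin (Dpow \<zeta>) N" "u \<in> N"
  shows "\<exists>S n. finite S \<and> S \<subseteq> \<zeta> \<and> Cyl \<zeta> u S n \<subseteq> N"
proof -
  obtain U where fin: "finite {t \<in> \<zeta>. U t \<noteq> topspace D_top}"
    and Uo: "\<forall>t\<in>\<zeta>. openin D_top (U t)" and uU: "u \<in> Pi\<^sub>E \<zeta> U" and UN: "Pi\<^sub>E \<zeta> U \<subseteq> N"
    using assms(1)[unfolded Dpow_def openin_product_topology_alt, rule_format, OF assms(2)] by blast
  define S where "S = {t \<in> \<zeta>. U t \<noteq> UNIV}"
  have finS: "finite S" using fin by (simp add: S_def)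
  have "\<forall>t\<in>S. \<exists>k. {f. \<forall>m<k. f m = u t m} \<subseteq> U t"
  proof
    fix t assume "t \<in> S"
    then have "t \<in> \<zeta>" by (simp add: S_def)
    then show "\<exists>k. {f. \<forall>m<k. f m = u t m} \<subseteq> U t"
      using nbhd_D[of "U t" "u t"] Uo uU by (simp add: PiE_iff)
  qed
  then obtain kf where kf0: "\<forall>t\<in>S. {f. \<forall>m<kf t. f m = u t m} \<subseteq> U t"
    by (rule bchoice[THEN exE])
  then have kf: "\<And>t. t \<in> S \<Longrightarrow> {f. \<forall>m<kf t. f m = u t m} \<subseteq> U t" by simp
  define n where "n = (\<Sum>t\<in>S. kf t)"
  have kn: "kf t \<le> n" if "t \<in> S" for t
    unfolding n_def by (rule member_le_sum[OF that _ finS]) simp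
  have "Cyl \<zeta> u S n \<subseteq> Pi\<^sub>E \<zeta> U"
  proof
    fix p assume p: "p \<in> Cyl \<zeta> u S n"
    then have pe: "p \<in> extensional \<zeta>" and pc: "\<And>t m. t \<in> S \<Longrightarrow> m < n \<Longrightarrow> p t m = u t m"
      by (auto simp: Cyl_def topspace_Dpow)
    have "p t \<in> U t" if t: "t \<in> \<zeta>" for t
    proof (cases "t \<in> S")
      case True
      have "p t \<in> {f. \<forall>m<kf t. f m = u t m}"
        using pc[OF True] kn[OF True] by simp
      then show ?thesis by (rule subsetD[OF kf[OF True]])
    next
      case False then have "U t = UNIV" using t by (simp add: S_def)
      then show ?thesis by simp
    qed
    then show "p \<in> Pi\<^sub>E \<zeta> U" using pe by (simp add: PiE_iff)
  qed
  then have "Cyl \<zeta> u S n \<subseteq> N" using UN by (rule subset_trans)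
  moreover have "S \<subseteq> \<zeta>" by (auto simp: S_def)
  ultimately show ?thesis using finS by (intro exI conjI)
qed



lemma good_restr:
  assumes "good \<zeta> H" "\<eta> \<in> Xi" "\<eta> \<subseteq> \<zeta>" "p \<in> topspace (Dpow \<zeta>)" "q \<in> topspace (Dpow \<zeta>)"
    "restr p \<eta> = restr q \<eta>"
  shows "restr (H p) \<eta> = restr (H q) \<eta>"
  using good_D[OF assms(1,4,5,2,3)] assms(6) by simp

lemma good_coord: "good \<zeta> H \<Longrightarrow> t \<in> \<zeta> \<Longrightarrow> continuous_map (Dpow \<zeta>) (discrete_topology UNIV) (\<lambda>x. H x t m)"
  using continuous_map_compose[OF good_cont cont_coord] by (simp add: o_def)

lemma top_ext: "p \<in> topspace (Dpow \<zeta>) \<Longrightarrow> q \<in> topspace (Dpow \<zeta>) \<Longrightarrow> (\<And>t. t \<in> \<zeta> \<Longrightarrow> p t = q t) \<Longrightarrow> p = q"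
  using restr_full restr_eq by metis

definition Mmap :: "'o list set \<Rightarrow> 'o list set \<Rightarrow> (('o list \<Rightarrow> nat \<Rightarrow> bool) \<Rightarrow> ('o list \<Rightarrow> nat \<Rightarrow> bool)) \<Rightarrow> ('o list \<Rightarrow> nat \<Rightarrow> bool) \<Rightarrow> ('o list \<Rightarrow> nat \<Rightarrow> bool)" where
  "Mmap \<zeta> \<eta> H u = restrict (\<lambda>t. if t \<in> \<eta> then H u t else u t) \<zeta>"

lemma Mmap_top: "Mmap \<zeta> \<eta> H u \<in> topspace (Dpow \<zeta>)"
  by (simp add: Mmap_def topspace_Dpow)

lemma Mmap_cont:
  assumes "good \<zeta> H" shows "continuous_map (Dpow \<zeta>) (Dpow \<zeta>) (Mmap \<zeta> \<eta> H)"
proof (rule cont_into_Dpow)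
  show "Mmap \<zeta> \<eta> H x \<in> extensional \<zeta>" for x by (simp add: Mmap_def)
  fix t m assume t: "t \<in> \<zeta>"
  show "continuous_map (Dpow \<zeta>) (discrete_topology UNIV) (\<lambda>x. Mmap \<zeta> \<eta> H x t m)"
  proof (cases "t \<in> \<eta>")
    case True
    then have e: "(\<lambda>x. Mmap \<zeta> \<eta> H x t m) = (\<lambda>x. H x t m)" using t by (simp add: Mmap_def)
    show ?thesis unfolding e by (rule good_coord[OF assms t])
  next
    case False
    then have e: "(\<lambda>x. Mmap \<zeta> \<eta> H x t m) = (\<lambda>x. x t m)" using t by (simp add: Mmap_def)
    show ?thesis unfolding e by (rule cont_coord[OF t])
  qed
qed

lemma Mmap_inj:
  assumes "good \<zeta> H" "\<eta> \<in> Xi" "\<eta> \<subseteq> \<zeta>"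
  shows "inj_on (Mmap \<zeta> \<eta> H) (topspace (Dpow \<zeta>))"
proof (rule inj_onI)
  fix x y assume x: "x \<in> topspace (Dpow \<zeta>)" and y: "y \<in> topspace (Dpow \<zeta>)" and e: "Mmap \<zeta> \<eta> H x = Mmap \<zeta> \<eta> H y"
  have e2: "(if t \<in> \<eta> then H x t else x t) = (if t \<in> \<eta> then H y t else y t)" if "t \<in> \<zeta>" for t
  proof -
    have "Mmap \<zeta> \<eta> H x t = Mmap \<zeta> \<eta> H y t" using e by simp
    then show ?thesis using that by (simp add: Mmap_def)
  qed
  have "restr (H x) \<eta> = restr (H y) \<eta>"
    unfolding restr_eq
  proof
    fix t assume t: "t \<in> \<eta>"
    then have "t \<in> \<zeta>" using assms(3) by (rule subsetD[rotated])
    from e2[OF this] t show "H x t = H y t" by simp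
  qed
  then have r: "restr x \<eta> = restr y \<eta>" using good_D[OF assms(1) x y assms(2,3)] by simp
  show "x = y"
  proof (rule top_ext[OF x y])
    fix t assume t: "t \<in> \<zeta>"
    show "x t = y t"
    proof (cases "t \<in> \<eta>")
      case True then show ?thesis using r unfolding restr_eq by simp
    next
      case False then show ?thesis using e2[OF t] by simp
    qed
  qed
qed

lemma Mmap_image:
  assumes "good \<zeta> HX" "good \<zeta> HY" "\<eta> \<in> Xi" "\<eta> \<subseteq> \<zeta>"
    "restr_set (HX ` topspace (Dpow \<zeta>)) \<eta> = restr_set (HY ` topspace (Dpow \<zeta>)) \<eta>"
  shows "Mmap \<zeta> \<eta> HX ` topspace (Dpow \<zeta>) \<subseteq> Mmap \<zeta> \<eta> HY ` topspace (Dpow \<zeta>)"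
proof
  fix z assume "z \<in> Mmap \<zeta> \<eta> HX ` topspace (Dpow \<zeta>)"
  then obtain p where p: "p \<in> topspace (Dpow \<zeta>)" and z: "z = Mmap \<zeta> \<eta> HX p" by blast
  have "restr (HX p) \<eta> \<in> restr_set (HX ` topspace (Dpow \<zeta>)) \<eta>"
    unfolding restr_set_def using p by simp
  then have "restr (HX p) \<eta> \<in> restr_set (HY ` topspace (Dpow \<zeta>)) \<eta>" using assms(5) by simp
  then obtain q0 where q0: "q0 \<in> topspace (Dpow \<zeta>)" and e0: "restr (HX p) \<eta> = restr (HY q0) \<eta>"
    unfolding restr_set_def by blast
  define q where "q = restrict (\<lambda>t. if t \<in> \<eta> then q0 t else p t) \<zeta>"
  have q: "q \<in> topspace (Dpow \<zeta>)" by (simp add: q_def topspace_Dpow)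
  have "restr q \<eta> = restr q0 \<eta>" unfolding restr_eq q_def using assms(4) by (auto simp: subset_iff)
  then have "restr (HY q) \<eta> = restr (HY q0) \<eta>" by (rule good_restr[OF assms(2,3,4) q q0])
  then have e1: "restr (HY q) \<eta> = restr (HX p) \<eta>" using e0 by simp
  have "Mmap \<zeta> \<eta> HY q = z"
  proof (rule top_ext[OF Mmap_top])
    show "z \<in> topspace (Dpow \<zeta>)" unfolding z by (rule Mmap_top)
    fix t assume t: "t \<in> \<zeta>"
    show "Mmap \<zeta> \<eta> HY q t = z t"
    proof (cases "t \<in> \<eta>")
      case True then show ?thesis using e1 t unfolding restr_eq z by (simp add: Mmap_def)
    next
      case False then show ?thesis using t unfolding z by (simp add: Mmap_def q_def)
    qed
  qed
  then show "z \<in> Mmap \<zeta> \<eta> HY ` topspace (Dpow \<zeta>)" using q by blast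
qed



lemma Xi_Int: "\<xi> \<in> Xi \<Longrightarrow> \<eta> \<in> Xi \<Longrightarrow> \<xi> \<inter> \<eta> \<in> Xi"
  unfolding Xi_def by auto

lemma align:
  assumes Z: "\<zeta> \<in> Xi" and E: "\<eta> \<in> Xi" "\<eta> \<subseteq> \<zeta>" and gX: "good \<zeta> HX" and gY: "good \<zeta> HY"
    and R: "restr_set (HX ` topspace (Dpow \<zeta>)) \<eta> = restr_set (HY ` topspace (Dpow \<zeta>)) \<eta>"
  obtains F where "good \<zeta> F" "F ` topspace (Dpow \<zeta>) = HY ` topspace (Dpow \<zeta>)"
    "\<And>u. u \<in> topspace (Dpow \<zeta>) \<Longrightarrow> restr (F u) \<eta> = restr (HX u) \<eta>"
proof -
  let ?T = "topspace (Dpow \<zeta>)"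
  let ?MX = "Mmap \<zeta> \<eta> HX" and ?MY = "Mmap \<zeta> \<eta> HY"
  have im: "?MX ` ?T = ?MY ` ?T"
    using Mmap_image[OF gX gY E R] Mmap_image[OF gY gX E R[symmetric]] by (rule subset_antisym)
  have MYs: "?MY ` ?T \<subseteq> ?T" using Mmap_top by blast
  have hY: "homeomorphic_map (Dpow \<zeta>) (subtopology (Dpow \<zeta>) (?MY ` ?T)) ?MY"
  proof (rule continuous_imp_homeomorphic_map)
    show "continuous_map (Dpow \<zeta>) (subtopology (Dpow \<zeta>) (?MY ` ?T)) ?MY"
      by (intro continuous_map_into_subtopology Mmap_cont[OF gY]) auto
    show "compact_space (Dpow \<zeta>)" by (rule compact_Dpow)
    show "Hausdorff_space (subtopology (Dpow \<zeta>) (?MY ` ?T))"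
      by (intro Hausdorff_space_subtopology Hausdorff_Dpow)
    show "?MY ` ?T = topspace (subtopology (Dpow \<zeta>) (?MY ` ?T))"
      using MYs by (simp add: Int_absorb1)
    show "inj_on ?MY ?T" by (rule Mmap_inj[OF gY E])
  qed
  then obtain g where g: "homeomorphic_maps (Dpow \<zeta>) (subtopology (Dpow \<zeta>) (?MY ` ?T)) ?MY g"
    unfolding homeomorphic_map_maps by (elim exE)
  have gc: "continuous_map (subtopology (Dpow \<zeta>) (?MY ` ?T)) (Dpow \<zeta>) g"
    and gl: "\<And>x. x \<in> ?T \<Longrightarrow> g (?MY x) = x"
    using g MYs unfolding homeomorphic_maps_def by (simp_all add: Int_absorb1)
  have g4: "\<forall>y\<in>topspace (subtopology (Dpow \<zeta>) (?MY ` ?T)). ?MY (g y) = y"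
    using g unfolding homeomorphic_maps_def by (rule conjunct2[THEN conjunct2, THEN conjunct2])
  have gr: "?MY (g y) = y" if y: "y \<in> ?MY ` ?T" for y
  proof -
    have "y \<in> topspace (subtopology (Dpow \<zeta>) (?MY ` ?T))" using y MYs by auto
    with g4 show ?thesis by (rule bspec)
  qed
  define G where "G = g \<circ> ?MX"
  define F where "F = HY \<circ> G"
  have GT: "G u \<in> ?T" and MG: "?MY (G u) = ?MX u" if u: "u \<in> ?T" for u
  proof -
    have "?MX u \<in> ?MY ` ?T" using im u by blast
    then obtain x where x: "x \<in> ?T" and ex: "?MX u = ?MY x" by blast
    show "G u \<in> ?T" unfolding G_def using gl[OF x] ex x by simp
    show "?MY (G u) = ?MX u" unfolding G_def using gr ex x by simp
  qed
  have Ga: "HY (G u) t = HX u t" if "u \<in> ?T" "t \<in> \<eta>" for u t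
  proof -
    have "?MY (G u) t = ?MX u t" using MG[OF that(1)] by simp
    moreover have "t \<in> \<zeta>" using that(2) E(2) by (rule subsetD[rotated])
    ultimately show ?thesis using that(2) by (simp add: Mmap_def)
  qed
  have Gb: "G u t = u t" if "u \<in> ?T" "t \<in> \<zeta>" "t \<notin> \<eta>" for u t
  proof -
    have "?MY (G u) t = ?MX u t" using MG[OF that(1)] by simp
    then show ?thesis using that(2,3) by (simp add: Mmap_def)
  qed
  have cG: "continuous_map (Dpow \<zeta>) (Dpow \<zeta>) G"
  proof -
    have "continuous_map (Dpow \<zeta>) (subtopology (Dpow \<zeta>) (?MY ` ?T)) ?MX"
      using im by (intro continuous_map_into_subtopology Mmap_cont[OF gX]) auto
    then show ?thesis unfolding G_def by (rule continuous_map_compose[OF _ gc])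
  qed
  have gF: "good \<zeta> F"
  proof (rule good_I)
    show "continuous_map (Dpow \<zeta>) (Dpow \<zeta>) F"
      unfolding F_def by (rule continuous_map_compose[OF cG good_cont[OF gY]])
    fix x0 x1 \<xi> assume x0: "x0 \<in> ?T" and x1: "x1 \<in> ?T" and xi: "\<xi> \<in> Xi" "\<xi> \<subseteq> \<zeta>"
    have XI: "\<xi> \<inter> \<eta> \<in> Xi" using xi(1) E(1) by (rule Xi_Int)
    have XIs: "\<xi> \<inter> \<eta> \<subseteq> \<zeta>" using xi(2) by blast
    have sp: "restr a \<xi> = restr b \<xi> \<longleftrightarrow> restr a (\<xi> \<inter> \<eta>) = restr b (\<xi> \<inter> \<eta>) \<and> (\<forall>t\<in>\<xi>-\<eta>. a t = b t)" for a b
      unfolding restr_eq by blast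
    have "restr x0 \<xi> = restr x1 \<xi> \<longleftrightarrow>
          restr x0 (\<xi> \<inter> \<eta>) = restr x1 (\<xi> \<inter> \<eta>) \<and> (\<forall>t\<in>\<xi>-\<eta>. x0 t = x1 t)" by (rule sp)
    also have "\<dots> \<longleftrightarrow> restr (HX x0) (\<xi> \<inter> \<eta>) = restr (HX x1) (\<xi> \<inter> \<eta>) \<and> (\<forall>t\<in>\<xi>-\<eta>. x0 t = x1 t)"
      using good_D[OF gX x0 x1 XI XIs] by simp
    also have "restr (HX x0) (\<xi> \<inter> \<eta>) = restr (HX x1) (\<xi> \<inter> \<eta>) \<longleftrightarrow>
               restr (HY (G x0)) (\<xi> \<inter> \<eta>) = restr (HY (G x1)) (\<xi> \<inter> \<eta>)"
      unfolding restr_eq using Ga[OF x0] Ga[OF x1] by simp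
    also have "\<dots> \<longleftrightarrow> restr (G x0) (\<xi> \<inter> \<eta>) = restr (G x1) (\<xi> \<inter> \<eta>)"
      using good_D[OF gY GT[OF x0] GT[OF x1] XI XIs] by simp
    also have "(\<forall>t\<in>\<xi>-\<eta>. x0 t = x1 t) \<longleftrightarrow> (\<forall>t\<in>\<xi>-\<eta>. G x0 t = G x1 t)"
    proof -
      have "\<forall>t\<in>\<xi>-\<eta>. G x0 t = x0 t \<and> G x1 t = x1 t"
      proof
        fix t assume t: "t \<in> \<xi> - \<eta>"
        then have "t \<in> \<zeta>" using xi(2) by blast
        then show "G x0 t = x0 t \<and> G x1 t = x1 t" using Gb[OF x0] Gb[OF x1] t by simp
      qed
      then show ?thesis by simp
    qed
    also have "(restr (G x0) (\<xi> \<inter> \<eta>) = restr (G x1) (\<xi> \<inter> \<eta>) \<and> (\<forall>t\<in>\<xi>-\<eta>. G x0 t = G x1 t))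
       \<longleftrightarrow> restr (G x0) \<xi> = restr (G x1) \<xi>" by (rule sp[symmetric])
    also have "\<dots> \<longleftrightarrow> restr (F x0) \<xi> = restr (F x1) \<xi>"
      unfolding F_def using good_D[OF gY GT[OF x0] GT[OF x1] xi] by simp
    finally show "restr x0 \<xi> = restr x1 \<xi> \<longleftrightarrow> restr (F x0) \<xi> = restr (F x1) \<xi>" .
  qed
  have "G ` ?T = ?T"
  proof
    show "G ` ?T \<subseteq> ?T" using GT by blast
    show "?T \<subseteq> G ` ?T"
    proof
      fix x assume x: "x \<in> ?T"
      have "?MY x \<in> ?MX ` ?T" using im x by blast
      then obtain u where u: "u \<in> ?T" and eu: "?MY x = ?MX u" by blast
      have "G u = x" unfolding G_def using gl[OF x] eu by simp
      then show "x \<in> G ` ?T" using u by blast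
    qed
  qed
  then have "F ` ?T = HY ` ?T" unfolding F_def image_comp[symmetric] by simp
  moreover have "restr (F u) \<eta> = restr (HX u) \<eta>" if "u \<in> ?T" for u
    unfolding restr_eq F_def using Ga[OF that] by simp
  ultimately show ?thesis using that gF by blast
qed



lemma Cyl_mono: "S1 \<subseteq> S \<Longrightarrow> n1 \<le> n \<Longrightarrow> Cyl \<zeta> u S n \<subseteq> Cyl \<zeta> u S1 n1"
  unfolding Cyl_def by auto

lemma Cyl_restr:
  assumes "restr u \<eta> = restr w \<eta>" "S \<subseteq> \<zeta>" "\<eta> \<subseteq> \<zeta>" "p \<in> Cyl \<zeta> u S n"
  shows "\<exists>q\<in>Cyl \<zeta> w S n. restr q \<eta> = restr p \<eta>"
proof -
  define q where "q = restrict (\<lambda>t. if t \<in> \<eta> then p t else w t) \<zeta>"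
  have uw: "u t = w t" if "t \<in> \<eta>" for t using assms(1) that unfolding restr_eq by simp
  have pc: "p t m = u t m" if "t \<in> S" "m < n" for t m using assms(4) that unfolding Cyl_def by simp
  have "q \<in> Cyl \<zeta> w S n"
    unfolding Cyl_def
  proof (intro CollectI conjI ballI allI impI)
    show "q \<in> topspace (Dpow \<zeta>)" by (simp add: q_def topspace_Dpow)
    fix t m assume t: "t \<in> S" and m: "m < n"
    have tz: "t \<in> \<zeta>" using assms(2) t by (rule subsetD)
    show "q t m = w t m"
    proof (cases "t \<in> \<eta>")
      case True then show ?thesis using tz pc[OF t m] uw[OF True] by (simp add: q_def)
    next
      case False then show ?thesis using tz by (simp add: q_def)
    qed
  qed
  moreover have "restr q \<eta> = restr p \<eta>"
    unfolding restr_eq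
  proof
    fix t assume t: "t \<in> \<eta>"
    then have "t \<in> \<zeta>" using assms(3) by (rule subsetD[rotated])
    then show "q t = p t" using t by (simp add: q_def)
  qed
  ultimately show ?thesis by blast
qed

definition Pre :: "'o list \<Rightarrow> 'o list set" where
  "Pre i = {s \<in> T_set. strict_ext s i}"

lemma Pre_fin: "finite (Pre i)"
proof (rule finite_subset)
  show "Pre i \<subseteq> (\<lambda>k. take k i) ` {..length i}"
  proof
    fix s assume "s \<in> Pre i"
    then obtain v where "i = s @ v" unfolding Pre_def strict_ext_def by blast
    then show "s \<in> (\<lambda>k. take k i) ` {..length i}" by (intro image_eqI[of _ _ "length s"]) auto
  qed
qed simp

lemma Pre_down: "s \<in> Pre i \<Longrightarrow> s' \<in> T_set \<Longrightarrow> strict_ext s' s \<Longrightarrow> s' \<in> Pre i"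
proof -
  assume a: "s \<in> Pre i" "s' \<in> T_set" "strict_ext s' s"
  then obtain v where v: "v \<noteq> []" "i = s @ v" unfolding Pre_def strict_ext_def by blast
  from a obtain v' where v': "s = s' @ v'" unfolding strict_ext_def by blast
  have "i = s' @ (v' @ v)" "v' @ v \<noteq> []" using v v' by auto
  then show "s' \<in> Pre i" using a(2) unfolding Pre_def strict_ext_def by blast
qed

lemma Pre_not: "i \<notin> Pre i"
  unfolding Pre_def strict_ext_def by auto

lemma Xi_T: "\<xi> \<in> Xi \<Longrightarrow> \<xi> \<subseteq> T_set" unfolding Xi_def by blast

lemma Xi_down: "\<xi> \<in> Xi \<Longrightarrow> t \<in> \<xi> \<Longrightarrow> s \<in> T_set \<Longrightarrow> strict_ext s t \<Longrightarrow> s \<in> \<xi>"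
  unfolding Xi_def by blast

lemma Pre_sub: "\<zeta> \<in> Xi \<Longrightarrow> i \<in> \<zeta> \<Longrightarrow> Pre i \<subseteq> \<zeta>"
  unfolding Pre_def using Xi_down by blast

lemma xia_Xi:
  assumes "\<eta> \<in> Xi" shows "\<eta> \<union> Pre i \<in> Xi"
proof -
  have "countable (\<eta> \<union> Pre i)" using assms Pre_fin unfolding Xi_def by (auto intro: countable_finite)
  moreover have "\<eta> \<union> Pre i \<subseteq> T_set" using Xi_T[OF assms] by (auto simp: Pre_def)
  moreover have "\<forall>t\<in>\<eta> \<union> Pre i. \<forall>s\<in>T_set. strict_ext s t \<longrightarrow> s \<in> \<eta> \<union> Pre i"
    using Xi_down[OF assms] Pre_down by blast
  ultimately show ?thesis unfolding Xi_def by blast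
qed

lemma xib_Xi:
  assumes "\<eta> \<in> Xi" "i \<in> T_set" shows "insert i (\<eta> \<union> Pre i) \<in> Xi"
proof -
  have a: "\<eta> \<union> Pre i \<in> Xi" using assms(1) by (rule xia_Xi)
  have "countable (insert i (\<eta> \<union> Pre i))" using a unfolding Xi_def by auto
  moreover have "insert i (\<eta> \<union> Pre i) \<subseteq> T_set" using Xi_T[OF a] assms(2) by auto
  moreover have "\<forall>t\<in>insert i (\<eta> \<union> Pre i). \<forall>s\<in>T_set. strict_ext s t \<longrightarrow> s \<in> insert i (\<eta> \<union> Pre i)"
  proof (intro ballI impI)
    fix t s assume t: "t \<in> insert i (\<eta> \<union> Pre i)" and s: "s \<in> T_set" and st: "strict_ext s t"
    show "s \<in> insert i (\<eta> \<union> Pre i)"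
    proof (cases "t = i")
      case True then show ?thesis using s st by (simp add: Pre_def)
    next
      case False then have "t \<in> \<eta> \<union> Pre i" using t by simp
      then show ?thesis using Xi_down[OF a _ s st] by simp
    qed
  qed
  ultimately show ?thesis unfolding Xi_def by blast
qed



theorem lemma2p21:
  fixes \<zeta> \<eta> :: "('o::wellorder) list set"
    and X Y :: "('o list \<Rightarrow> nat \<Rightarrow> bool) set"
    and i :: "'o list"
  assumes omega1: "\<not> countable (UNIV :: 'o set)" "\<forall>a::'o. countable {b. b < a}"
    and "\<zeta> \<in> Xi" "\<eta> \<in> Xi" "\<eta> \<subseteq> \<zeta>"
    and "X \<in> IPS \<zeta>" "Y \<in> IPS \<zeta>"
    and "restr_set X \<eta> = restr_set Y \<eta>"
    and "i \<in> \<zeta> - \<eta>"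
  shows "\<exists>(k::nat) X' Y'. X' \<in> IPS \<zeta> \<and> Y' \<in> IPS \<zeta> \<and> X' \<subseteq> X \<and> Y' \<subseteq> Y \<and>
           clopen_in X' \<zeta> X \<and> clopen_in Y' \<zeta> Y \<and>
           restr_set X' \<eta> = restr_set Y' \<eta> \<and>
           ((\<forall>x\<in>X'. \<forall>y\<in>Y'. x i k = False \<and> y i k = True) \<or>
            (\<forall>x\<in>X'. \<forall>y\<in>Y'. x i k = True \<and> y i k = False))"
proof -
  note Z = assms(3) and E = assms(4,5) and R = assms(8)
  have iz: "i \<in> \<zeta>" and ie: "i \<notin> \<eta>" using assms(9) by auto
  let ?T = "topspace (Dpow \<zeta>)"
  obtain HX where gX: "good \<zeta> HX" and HXi: "HX ` ?T = X"
    using IPS_good[OF assms(6)] by blast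
  obtain HY where gY: "good \<zeta> HY" and HYi: "HY ` ?T = Y"
    using IPS_good[OF assms(7)] by blast
  have R': "restr_set (HX ` ?T) \<eta> = restr_set (HY ` ?T) \<eta>" using R HXi HYi by simp
  obtain F where gF: "good \<zeta> F" and Fi: "F ` ?T = Y"
    and FR: "\<And>u. u \<in> ?T \<Longrightarrow> restr (F u) \<eta> = restr (HX u) \<eta>"
    using align[OF Z E gX gY R'] HYi by metis
  define xa where "xa = \<eta> \<union> Pre i"
  define xb where "xb = insert i xa"
  have xaX: "xa \<in> Xi" unfolding xa_def using E(1) by (rule xia_Xi)
  have iT: "i \<in> T_set" using Xi_T[OF Z] iz by blast
  have xbX: "xb \<in> Xi" unfolding xb_def xa_def using E(1) iT by (rule xib_Xi)
  have xas: "xa \<subseteq> \<zeta>" unfolding xa_def using E(2) Pre_sub[OF Z iz] by blast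
  have xbs: "xb \<subseteq> \<zeta>" unfolding xb_def using xas iz by blast
  have ixa: "i \<notin> xa" unfolding xa_def using ie Pre_not by blast
  define u0 where "u0 = restrict (\<lambda>t. \<lambda>n::nat. False) \<zeta>"
  define v0 where "v0 = restrict (\<lambda>t. if t = i then (\<lambda>n::nat. True) else (\<lambda>n. False)) \<zeta>"
  have u0T: "u0 \<in> ?T" and v0T: "v0 \<in> ?T" by (simp_all add: u0_def v0_def topspace_Dpow)
  have "restr u0 xa = restr v0 xa"
    unfolding restr_eq
  proof
    fix t assume t: "t \<in> xa"
    then have "t \<noteq> i" using ixa by blast
    then show "u0 t = v0 t" by (simp add: u0_def v0_def)
  qed
  then have Fa: "restr (F u0) xa = restr (F v0) xa" using good_D[OF gF u0T v0T xaX xas] by simp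
  have "restr u0 xb \<noteq> restr v0 xb"
  proof
    assume "restr u0 xb = restr v0 xb"
    then have "u0 i = v0 i" unfolding restr_eq xb_def by simp
    then have "u0 i 0 = v0 i 0" by simp
    then show False using iz by (simp add: u0_def v0_def)
  qed
  then have Fb: "restr (F u0) xb \<noteq> restr (F v0) xb" using good_D[OF gF u0T v0T xbX xbs] by simp
  have Fuv: "F u0 i \<noteq> F v0 i"
  proof
    assume e: "F u0 i = F v0 i"
    have "restr (F u0) xb = restr (F v0) xb"
      unfolding restr_eq xb_def using Fa e unfolding restr_eq by simp
    with Fb show False by simp
  qed
  have ruv: "restr u0 \<eta> = restr v0 \<eta>"
    unfolding restr_eq
  proof
    fix t assume t: "t \<in> \<eta>"
    then have "t \<noteq> i" using ie by blast
    then show "u0 t = v0 t" by (simp add: u0_def v0_def)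
  qed
  obtain w where wT: "w \<in> ?T" and rw: "restr u0 \<eta> = restr w \<eta>" and hw: "HX u0 i \<noteq> F w i"
  proof (cases "HX u0 i = F u0 i")
    case True
    then have "HX u0 i \<noteq> F v0 i" using Fuv by simp
    then show ?thesis using that[OF v0T ruv] by simp
  next
    case False
    then show ?thesis using that[OF u0T refl] by simp
  qed
  have "\<exists>k. HX u0 i k \<noteq> F w i k"
  proof (rule ccontr)
    assume "\<not> (\<exists>k. HX u0 i k \<noteq> F w i k)"
    then have "HX u0 i = F w i" by (simp add: fun_eq_iff)
    with hw show False by simp
  qed
  then obtain k where hk: "HX u0 i k \<noteq> F w i k" by (elim exE)
  define b where "b = HX u0 i k"
  define N1 where "N1 = {p \<in> ?T. HX p i k \<in> {b}}"
  define N2 where "N2 = {p \<in> ?T. F p i k \<in> {\<not> b}}"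
  have N1o: "openin (Dpow \<zeta>) N1"
    unfolding N1_def by (rule openin_continuous_map_preimage[OF good_coord[OF gX iz]]) simp
  have N2o: "openin (Dpow \<zeta>) N2"
    unfolding N2_def by (rule openin_continuous_map_preimage[OF good_coord[OF gF iz]]) simp
  have u0N: "u0 \<in> N1" using u0T by (simp add: N1_def b_def)
  have wN: "w \<in> N2" using wT hk by (simp add: N2_def b_def)
  obtain S1 n1 where S1: "finite S1" "S1 \<subseteq> \<zeta>" "Cyl \<zeta> u0 S1 n1 \<subseteq> N1"
    using nbhd_cyl[OF N1o u0N] by blast
  obtain S2 n2 where S2: "finite S2" "S2 \<subseteq> \<zeta>" "Cyl \<zeta> w S2 n2 \<subseteq> N2"
    using nbhd_cyl[OF N2o wN] by blast
  define S where "S = S1 \<union> S2"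
  define n where "n = n1 + n2"
  have fS: "finite S" and Ss: "S \<subseteq> \<zeta>" using S1 S2 by (auto simp: S_def)
  define U where "U = Cyl \<zeta> u0 S n"
  define V where "V = Cyl \<zeta> w S n"
  have UN: "U \<subseteq> N1" unfolding U_def
    using Cyl_mono[of S1 S n1 n \<zeta> u0] S1(3) by (auto simp: S_def n_def)
  have VN: "V \<subseteq> N2" unfolding V_def
    using Cyl_mono[of S2 S n2 n \<zeta> w] S2(3) by (auto simp: S_def n_def)
  define X' where "X' = HX ` U"
  define Y' where "Y' = F ` V"
  have X'I: "X' \<in> IPS \<zeta>"
  proof -
    have "X' = (HX \<circ> Phi \<zeta> u0 S n) ` ?T"
      unfolding X'_def U_def image_comp[symmetric] Phi_image[OF Ss] ..
    then show ?thesis using good_IPS[OF Z good_comp[OF gX good_Phi]] by simp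
  qed
  have Y'I: "Y' \<in> IPS \<zeta>"
  proof -
    have "Y' = (F \<circ> Phi \<zeta> w S n) ` ?T"
      unfolding Y'_def V_def image_comp[symmetric] Phi_image[OF Ss] ..
    then show ?thesis using good_IPS[OF Z good_comp[OF gF good_Phi]] by simp
  qed
  have UT: "U \<subseteq> ?T" and VT: "V \<subseteq> ?T" by (auto simp: U_def V_def Cyl_def)
  have X's: "X' \<subseteq> X" unfolding X'_def using UT HXi by blast
  have Y's: "Y' \<subseteq> Y" unfolding Y'_def using VT Fi by blast
  have X'c: "clopen_in X' \<zeta> X"
    using good_clopen[OF Z gX Cyl_open[OF fS Ss] Cyl_closed[OF Ss]] HXi
    unfolding X'_def U_def by simp
  have Y'c: "clopen_in Y' \<zeta> Y"
    using good_clopen[OF Z gF Cyl_open[OF fS Ss] Cyl_closed[OF Ss]] Fi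
    unfolding Y'_def V_def by simp
  have RR: "restr_set X' \<eta> = restr_set Y' \<eta>"
  proof
    show "restr_set X' \<eta> \<subseteq> restr_set Y' \<eta>"
    proof
      fix z assume "z \<in> restr_set X' \<eta>"
      then obtain p where p: "p \<in> U" and z: "z = restr (HX p) \<eta>"
        unfolding restr_set_def X'_def by blast
      obtain q where q: "q \<in> V" and rq: "restr q \<eta> = restr p \<eta>"
        using Cyl_restr[OF rw Ss E(2) p[unfolded U_def]] unfolding V_def by blast
      have qT: "q \<in> ?T" and pT: "p \<in> ?T" using p q UT VT by auto
      have "restr (F q) \<eta> = restr (HX q) \<eta>" by (rule FR[OF qT])
      also have "\<dots> = restr (HX p) \<eta>" by (rule good_restr[OF gX E qT pT rq])
      finally have "z = restr (F q) \<eta>" using z by simp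
      then show "z \<in> restr_set Y' \<eta>" unfolding restr_set_def Y'_def using q by blast
    qed
    show "restr_set Y' \<eta> \<subseteq> restr_set X' \<eta>"
    proof
      fix z assume "z \<in> restr_set Y' \<eta>"
      then obtain q where q: "q \<in> V" and z: "z = restr (F q) \<eta>"
        unfolding restr_set_def Y'_def by blast
      obtain p where p: "p \<in> U" and rp: "restr p \<eta> = restr q \<eta>"
        using Cyl_restr[OF rw[symmetric] Ss E(2) q[unfolded V_def]] unfolding U_def by blast
      have qT: "q \<in> ?T" and pT: "p \<in> ?T" using p q UT VT by auto
      have "restr (F q) \<eta> = restr (HX q) \<eta>" by (rule FR[OF qT])
      also have "\<dots> = restr (HX p) \<eta>" by (rule good_restr[OF gX E qT pT rp[symmetric]])
      finally have "z = restr (HX p) \<eta>" using z by simp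
      then show "z \<in> restr_set X' \<eta>" unfolding restr_set_def X'_def using p by blast
    qed
  qed
  have sx: "x i k = b" if xX: "x \<in> X'" for x
  proof -
    obtain p where "p \<in> U" "x = HX p" using xX unfolding X'_def by blast
    then show ?thesis using UN unfolding N1_def by auto
  qed
  have sy: "y i k = (\<not> b)" if yY: "y \<in> Y'" for y
  proof -
    obtain p where "p \<in> V" "y = F p" using yY unfolding Y'_def by blast
    then show ?thesis using VN unfolding N2_def by auto
  qed
  have sep: "(\<forall>x\<in>X'. \<forall>y\<in>Y'. x i k = False \<and> y i k = True) \<or>
            (\<forall>x\<in>X'. \<forall>y\<in>Y'. x i k = True \<and> y i k = False)"
  proof (cases b)
    case True
    have "\<forall>x\<in>X'. \<forall>y\<in>Y'. x i k = True \<and> y i k = False" using sx sy True by auto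
    then show ?thesis by (rule disjI2)
  next
    case False
    have "\<forall>x\<in>X'. \<forall>y\<in>Y'. x i k = False \<and> y i k = True" using sx sy False by auto
    then show ?thesis by (rule disjI1)
  qed
  show ?thesis
    using X'I Y'I X's Y's X'c Y'c RR sep by (intro exI[of _ k] exI[of _ X'] exI[of _ Y'] conjI)
qed

end
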